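(* The bound of Corollary 9 is optimal: there exist $n$-qubit unitary stabilizer circuits such that every equivalent unitary stabilizer circuit has $\Omega(n^2/\log n)$ gates.
   Context: A unitary stabilizer circuit is a circuit consisting only of CNOT, Hadamard and phase ($\mathrm{diag}(1,i)$) gates, each gate acting on specified qubits among $n$. Two such circuits are equivalent if the unitaries they implement agree up to a global phase. Corollary 9 states that every $n$-qubit unitary stabilizer circuit has an equivalent one with $O(n^2/\log n)$ gates. *)

theory Defs
  imports Complex_Main "Jordan_Normal_Form.Matrix"
begin

text \<open>Gates of unitary stabilizer circuits. Qubits are indexed by naturals 0..n-1.
  CNOT c t has control c and target t; S is the phase gate diag(1,i).\<close>
datatype gate = CNOT nat nat | Had nat | Phase nat

text \<open>Computational basis states of n qubits are indexed by x < 2^n; qubit q of x is bit q.\<close>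
definition qbit :: "nat \<Rightarrow> nat \<Rightarrow> nat" where
  "qbit q x = (x div 2 ^ q) mod 2"

definition flip_bit :: "nat \<Rightarrow> nat \<Rightarrow> nat" where
  "flip_bit q x = (if qbit q x = 1 then x - 2 ^ q else x + 2 ^ q)"

definition gate_ok :: "nat \<Rightarrow> gate \<Rightarrow> bool" where
  "gate_ok n g = (case g of
       CNOT c t \<Rightarrow> c < n \<and> t < n \<and> c \<noteq> t
     | Had q \<Rightarrow> q < n
     | Phase q \<Rightarrow> q < n)"

definition circuit_ok :: "nat \<Rightarrow> gate list \<Rightarrow> bool" where
  "circuit_ok n C = (\<forall>g \<in> set C. gate_ok n g)"

text \<open>The 2^n x 2^n unitary of a gate acting on n qubits; entry (r,c) = <r|G|c>.\<close>
definition gate_mat :: "nat \<Rightarrow> gate \<Rightarrow> complex mat" where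
  "gate_mat n g = mat (2 ^ n) (2 ^ n) (\<lambda>(r, c). case g of
       CNOT a b \<Rightarrow> (if r = (if qbit a c = 1 then flip_bit b c else c) then 1 else 0)
     | Had q \<Rightarrow> (if r = c \<or> r = flip_bit q c
                 then (if qbit q r = 1 \<and> qbit q c = 1 then - 1 else 1) / complex_of_real (sqrt 2)
                 else 0)
     | Phase q \<Rightarrow> (if r = c then (if qbit q c = 1 then \<i> else 1) else 0))"

text \<open>Unitary implemented by a circuit: the first gate of the list is applied first.\<close>
definition circuit_mat :: "nat \<Rightarrow> gate list \<Rightarrow> complex mat" where
  "circuit_mat n C = foldl (\<lambda>M g. gate_mat n g * M) (1\<^sub>m (2 ^ n)) C"

definition circuit_equiv :: "nat \<Rightarrow> gate list \<Rightarrow> gate list \<Rightarrow> bool" where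
  "circuit_equiv n C D = (\<exists>z::complex. cmod z = 1 \<and> circuit_mat n C = z \<cdot>\<^sub>m circuit_mat n D)"

end

theory Submission
  imports Defs
begin

definition cnotf :: "nat \<Rightarrow> nat \<Rightarrow> nat \<Rightarrow> nat" where
  "cnotf a b x = (if qbit a x = 1 then flip_bit b x else x)"

definition pm :: "nat \<Rightarrow> (nat \<Rightarrow> nat) \<Rightarrow> complex mat" where
  "pm N f = mat N N (\<lambda>(r, c). if r = f c then 1 else 0)"

lemma qbit_bit: "qbit q x = (if bit x q then 1 else 0)"
  unfolding qbit_def by (simp add: bit_iff_odd odd_iff_mod_2_eq_one)

lemma unset_nat: "bit (x::nat) b \<Longrightarrow> unset_bit b x = x - 2 ^ b"
proof -
  assume h: "bit x b"
  have "int (unset_bit b x) = unset_bit b (int x)" by (rule of_nat_unset_bit_eq)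
  also have "\<dots> = int x - 2 ^ b" using h by (simp add: unset_bit_eq bit_of_nat_iff)
  finally have "int (unset_bit b x) = int x - 2 ^ b" .
  moreover have "2 ^ b \<le> x" using h
    by (metis bit_iff_odd div_less even_zero not_le)
  ultimately show ?thesis by (metis of_nat_diff of_nat_eq_iff of_nat_numeral of_nat_power)
qed

lemma flip_bit_eq: "Defs.flip_bit b x = Bit_Operations.flip_bit b x"
  unfolding Defs.flip_bit_def qbit_bit
  by (simp add: flip_bit_eq_if set_bit_eq unset_nat)

lemma qbit_flip: "qbit q (Defs.flip_bit b x) = (if q = b then 1 - qbit q x else qbit q x)"
  unfolding flip_bit_eq qbit_bit by (auto simp: bit_flip_bit_iff)

lemma qbit_le1: "qbit q x \<le> 1"
  unfolding qbit_bit by auto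

lemma qbit_cnotf: "a \<noteq> b \<Longrightarrow>
  qbit q (cnotf a b x) = (if q = b then (qbit b x + qbit a x) mod 2 else qbit q x)"
proof -
  have "qbit b x = 0 \<or> qbit b x = 1" "qbit a x = 0 \<or> qbit a x = 1"
    using qbit_le1[of b x] qbit_le1[of a x] by auto
  thus ?thesis unfolding cnotf_def by (auto simp: qbit_flip)
qed

lemma flip_lt: "x < 2 ^ n \<Longrightarrow> b < n \<Longrightarrow> Defs.flip_bit b x < 2 ^ n"
  unfolding flip_bit_eq
  by (metis take_bit_flip_bit_eq take_bit_nat_eq_self_iff not_le)

lemma cnotf_lt: "x < 2 ^ n \<Longrightarrow> b < n \<Longrightarrow> cnotf a b x < 2 ^ n"
  unfolding cnotf_def using flip_lt by auto

lemma gate_mat_cnot: "gate_mat n (CNOT a b) = pm (2^n) (cnotf a b)"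
  unfolding gate_mat_def pm_def cnotf_def by simp

lemma pm_mult:
  assumes "\<forall>c<N. f c < N"
  shows "pm N g * pm N f = pm N (g \<circ> f)"
proof (rule eq_matI)
  fix i j assume ij: "i < dim_row (pm N (g \<circ> f))" "j < dim_col (pm N (g \<circ> f))"
  hence i: "i < N" and j: "j < N" by (auto simp: pm_def)
  have "(pm N g * pm N f) $$ (i, j) = (\<Sum>k<N. (if i = g k then 1 else 0) * (if k = f j then 1 else 0))"
    using i j by (simp add: pm_def scalar_prod_def lessThan_atLeast0)
  also have "\<dots> = (\<Sum>k<N. if k = f j then (if i = g k then 1 else 0) else 0)"
    by (rule sum.cong) auto
  also have "\<dots> = (if i = g (f j) then 1 else 0)"
    using assms j by (simp add: sum.delta)
  finally show "(pm N g * pm N f) $$ (i, j) = pm N (g \<circ> f) $$ (i, j)"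
    using i j by (simp add: pm_def)
qed (auto simp: pm_def)

fun cf :: "gate list \<Rightarrow> nat \<Rightarrow> nat" where
  "cf [] = id"
| "cf (CNOT a b # gs) = cf gs \<circ> cnotf a b"
| "cf (_ # gs) = cf gs"

definition cnot_ok :: "nat \<Rightarrow> gate list \<Rightarrow> bool" where
  "cnot_ok n C = (\<forall>g\<in>set C. \<exists>a b. g = CNOT a b \<and> b < n)"

lemma foldl_pm:
  assumes "cnot_ok n C" "\<forall>c<2^n. f c < 2^n"
  shows "foldl (\<lambda>M g. gate_mat n g * M) (pm (2^n) f) C = pm (2^n) (cf C \<circ> f)"
  using assms
proof (induction C arbitrary: f)
  case Nil
  then show ?case by simp
next
  case (Cons g gs)
  then obtain a b where g: "g = CNOT a b" "b < n" by (auto simp: cnot_ok_def)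
  have ok: "cnot_ok n gs" using Cons.prems by (auto simp: cnot_ok_def)
  have "gate_mat n g * pm (2^n) f = pm (2^n) (cnotf a b \<circ> f)"
    unfolding g gate_mat_cnot by (rule pm_mult) (use Cons.prems in auto)
  moreover have "\<forall>c<2^n. (cnotf a b \<circ> f) c < 2^n" using Cons.prems g cnotf_lt by auto
  ultimately show ?case using Cons.IH[OF ok] g by (simp add: comp_assoc)
qed

lemma circuit_mat_pm:
  assumes "cnot_ok n C"
  shows "circuit_mat n C = pm (2^n) (cf C)"
proof -
  have "1\<^sub>m (2^n) = pm (2^n) id"
    by (rule eq_matI) (auto simp: pm_def)
  thus ?thesis unfolding circuit_mat_def using foldl_pm[OF assms, of id] by simp
qed

lemma pm_equiv:
  assumes "pm N f = z1 \<cdot>\<^sub>m M" "pm N g = z2 \<cdot>\<^sub>m M" "z2 \<noteq> 0"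
    "c < N" "f c < N"
  shows "f c = g c"
proof -
  have "dim_row (pm N f) = N" "dim_col (pm N f) = N" by (auto simp: pm_def)
  hence "dim_row M = N" "dim_col M = N" using assms(1) by auto
  then have e1: "1 = z1 * M $$ (f c, c)" using arg_cong[OF assms(1), of "\<lambda>A. A $$ (f c, c)"] assms
    by (simp add: pm_def)
  have "pm N g $$ (f c, c) = z2 * M $$ (f c, c)" using assms(2) assms(4,5) \<open>dim_row M = N\<close> \<open>dim_col M = N\<close>
    by simp
  moreover have "M $$ (f c, c) \<noteq> 0" using e1 by auto
  ultimately have "pm N g $$ (f c, c) \<noteq> 0" using assms(3) by simp
  thus ?thesis using assms(4,5) by (simp add: pm_def split: if_splits)
qed


lemma cf_lt: "cnot_ok n C \<Longrightarrow> c < 2^n \<Longrightarrow> cf C c < 2^n"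
proof (induction C arbitrary: c)
  case Nil thus ?case by simp
next
  case (Cons g gs)
  then obtain a b where g: "g = CNOT a b" "b < n" by (auto simp: cnot_ok_def)
  have ok: "cnot_ok n gs" using Cons.prems by (auto simp: cnot_ok_def)
  show ?case using Cons.IH[OF ok] cnotf_lt[OF Cons.prems(2) g(2)] g by simp
qed

definition gm :: "nat \<Rightarrow> nat \<times> nat \<Rightarrow> gate" where
  "gm m p = CNOT (fst p) (m + snd p)"

lemma cf_map_ctrl:
  assumes "\<forall>p\<in>set ps. fst p < m" "q < m"
  shows "qbit q (cf (map (gm m) ps) x) = qbit q x"
  using assms
proof (induction ps arbitrary: x)
  case Nil thus ?case by simp
next
  case (Cons p ps)
  have "qbit q (cf (map (gm m) (p # ps)) x) = qbit q (cf (map (gm m) ps) (cnotf (fst p) (m + snd p) x))"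
    by (simp add: gm_def)
  also have "\<dots> = qbit q (cnotf (fst p) (m + snd p) x)" using Cons by simp
  also have "\<dots> = qbit q x" using Cons.prems by (simp add: qbit_cnotf)
  finally show ?case .
qed

lemma cf_map_targ:
  assumes "\<forall>p\<in>set ps. fst p < m"
  shows "qbit (m + j) (cf (map (gm m) ps) x) =
     (qbit (m + j) x + length (filter (\<lambda>p. snd p = j \<and> qbit (fst p) x = 1) ps)) mod 2"
  using assms
proof (induction ps arbitrary: x)
  case Nil thus ?case using qbit_le1[of "m+j" x] by simp
next
  case (Cons p ps)
  define y where "y = cnotf (fst p) (m + snd p) x"
  have ne: "fst p \<noteq> m + snd p" using Cons.prems by auto
  have ctrl: "qbit i y = qbit i x" if "i < m" for i
    using that ne unfolding y_def by (simp add: qbit_cnotf)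
  have fl: "filter (\<lambda>p. snd p = j \<and> qbit (fst p) y = 1) ps = filter (\<lambda>p. snd p = j \<and> qbit (fst p) x = 1) ps"
    using Cons.prems ctrl by (intro filter_cong) auto
  have "qbit (m + j) (cf (map (gm m) (p # ps)) x) = qbit (m + j) (cf (map (gm m) ps) y)"
    by (simp add: gm_def y_def)
  also have "\<dots> = (qbit (m + j) y + length (filter (\<lambda>p. snd p = j \<and> qbit (fst p) x = 1) ps)) mod 2"
    using Cons fl by simp
  also have "qbit (m + j) y = (if snd p = j then (qbit (m+j) x + qbit (fst p) x) mod 2 else qbit (m+j) x)"
    unfolding y_def using ne by (simp add: qbit_cnotf)
  finally show ?case
    using qbit_le1[of "fst p" x] by (cases "qbit (fst p) x") (auto simp: mod_add_left_eq add.assoc)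
qed

definition pairs :: "nat \<Rightarrow> (nat \<times> nat) list" where
  "pairs m = List.product [0..<m] [0..<m]"

definition circ :: "nat \<Rightarrow> (nat \<times> nat) set \<Rightarrow> gate list" where
  "circ m S = map (gm m) (filter (\<lambda>p. p \<in> S) (pairs m))"

lemma set_pairs: "set (pairs m) = {..<m} \<times> {..<m}"
  by (auto simp: pairs_def)

lemma qbit_pow: "qbit q (2 ^ i) = (if q = i then 1 else 0)"
  by (simp add: qbit_bit bit_exp_iff)

lemma circ_bit:
  assumes "i < m" "j < m"
  shows "qbit (m + j) (cf (circ m S) (2 ^ i)) = (if (i, j) \<in> S then 1 else 0)"
proof -
  have fs: "\<forall>p\<in>set (filter (\<lambda>p. p \<in> S) (pairs m)). fst p < m" by (auto simp: set_pairs)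
  have d: "distinct (filter (\<lambda>p. p \<in> S) (pairs m))"
    by (simp add: pairs_def distinct_product)
  have eq: "{x. snd x = j \<and> qbit (fst x) (2 ^ i) = 1} \<inter> set (filter (\<lambda>p. p \<in> S) (pairs m))
      = (if (i, j) \<in> S then {(i,j)} else {})"
    using assms by (auto simp: qbit_pow set_pairs split: if_splits)
  have "length (filter (\<lambda>p. snd p = j \<and> qbit (fst p) (2 ^ i) = 1) (filter (\<lambda>p. p \<in> S) (pairs m)))
      = card ({x. snd x = j \<and> qbit (fst x) (2 ^ i) = 1} \<inter> set (filter (\<lambda>p. p \<in> S) (pairs m)))"
    by (rule distinct_length_filter[OF d])
  also have "\<dots> = card (if (i, j) \<in> S then {(i,j)} else {})" by (simp only: eq)
  also have "\<dots> = (if (i, j) \<in> S then 1 else 0)" by simp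
  finally have "length (filter (\<lambda>p. snd p = j \<and> qbit (fst p) (2 ^ i) = 1) (filter (\<lambda>p. p \<in> S) (pairs m)))
      = (if (i, j) \<in> S then 1 else 0)" .
  moreover have "qbit (m + j) (2 ^ i) = 0" using assms by (simp add: qbit_pow)
  ultimately show ?thesis unfolding circ_def using cf_map_targ[OF fs, of j "2^i"] by simp
qed

lemma circ_ok: "2 * m \<le> n \<Longrightarrow> S \<subseteq> {..<m} \<times> {..<m} \<Longrightarrow> circuit_ok n (circ m S) \<and> cnot_ok n (circ m S)"
  by (auto simp: circ_def circuit_ok_def cnot_ok_def gate_ok_def gm_def set_pairs)

lemma circ_inj:
  assumes "2 * m \<le> n" "S \<subseteq> {..<m} \<times> {..<m}" "T \<subseteq> {..<m} \<times> {..<m}"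
    "\<forall>c < 2^n. cf (circ m S) c = cf (circ m T) c"
  shows "S = T"
proof -
  have "p \<in> S \<longleftrightarrow> p \<in> T" if "p \<in> {..<m} \<times> {..<m}" for p
  proof -
    obtain i j where p0: "p = (i, j)" by (cases p)
    hence p: "p = (i, j)" "i < m" "j < m" using that by auto
    have "(2::nat) ^ i < 2 ^ n" using p assms(1) by simp
    hence "cf (circ m S) (2^i) = cf (circ m T) (2^i)" using assms(4) by blast
    hence "(if (i,j) \<in> S then 1 else 0) = (if (i,j) \<in> T then 1 else (0::nat))"
      using circ_bit[OF p(2,3), of S] circ_bit[OF p(2,3), of T] by metis
    thus ?thesis using p(1) by (cases "(i,j) \<in> S"; cases "(i,j) \<in> T") simp_all
  qed
  thus ?thesis using assms(2,3) by blast
qed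


lemma count_short:
  assumes G: "finite G" "card G \<ge> 2"
  shows "card {D. set D \<subseteq> G \<and> length D \<le> K} \<le> card G ^ (2 * K)"
proof -
  let ?g = "card G"
  have eq: "{D. set D \<subseteq> G \<and> length D \<le> K} = (\<Union>k\<in>{..K}. {D. set D \<subseteq> G \<and> length D = k})"
    by auto
  have "card {D. set D \<subseteq> G \<and> length D \<le> K} \<le> (\<Sum>k\<in>{..K}. card {D. set D \<subseteq> G \<and> length D = k})"
    unfolding eq by (rule card_UN_le) simp
  also have "\<dots> = (\<Sum>k\<in>{..K}. ?g ^ k)" using G by (simp add: card_lists_length_eq)
  also have "\<dots> \<le> (\<Sum>k\<in>{..K}. ?g ^ K)"
    by (rule sum_mono) (use G in \<open>auto intro: power_increasing\<close>)
  also have "\<dots> = (K + 1) * ?g ^ K" by simp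
  also have "K + 1 \<le> 2 ^ K" by (simp add: Suc_leI)
  hence "(K + 1) * ?g ^ K \<le> 2 ^ K * ?g ^ K" by (rule mult_right_mono) simp
  also have "2 ^ K * ?g ^ K \<le> ?g ^ K * ?g ^ K" using G by (simp add: power_mono)
  also have "\<dots> = ?g ^ (2 * K)" by (simp add: power_add[symmetric] mult_2)
  finally show ?thesis .
qed

lemma gates_finite_card:
  assumes "n \<ge> 2"
  shows "finite {g. gate_ok n g} \<and> 2 \<le> card {g. gate_ok n g} \<and> card {g. gate_ok n g} \<le> n ^ 3"
proof -
  let ?A = "(\<lambda>p. CNOT (fst p) (snd p)) ` ({..<n} \<times> {..<n}) \<union> Had ` {..<n} \<union> Phase ` {..<n}"
  have sub: "{g. gate_ok n g} \<subseteq> ?A"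
  proof
    fix g assume "g \<in> {g. gate_ok n g}"
    thus "g \<in> ?A" by (cases g) (auto simp: gate_ok_def image_iff)
  qed
  have fA: "finite ?A" by simp
  let ?C = "(\<lambda>p. CNOT (fst p) (snd p)) ` ({..<n} \<times> {..<n})"
  have a1: "card ?A \<le> card (?C \<union> Had ` {..<n}) + card (Phase ` {..<n})" by (rule card_Un_le)
  have a2: "card (?C \<union> Had ` {..<n}) \<le> card ?C + card (Had ` {..<n})" by (rule card_Un_le)
  have a3: "card ?C \<le> n * n"
    using card_image_le[of "{..<n} \<times> {..<n}" "\<lambda>p. CNOT (fst p) (snd p)"] by (simp add: card_cartesian_product)
  have a4: "card (Had ` {..<n}) \<le> n" using card_image_le[of "{..<n}" Had] by simp
  have a5: "card (Phase ` {..<n}) \<le> n" using card_image_le[of "{..<n}" Phase] by simp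
  have "2 * n \<le> n * n" using assms by (intro mult_le_mono1)
  hence "n * n + n + n \<le> n * n * n" using assms
  proof -
    have h2: "(n * n) * 2 \<le> (n * n) * n" using assms by (intro mult_le_mono2)
    show ?thesis using \<open>2 * n \<le> n * n\<close> h2 by linarith
  qed
  hence "card ?A \<le> n ^ 3" using a1 a2 a3 a4 a5 by (simp add: power3_eq_cube)
  then have c1: "card {g. gate_ok n g} \<le> n ^ 3" using card_mono[OF fA sub] by simp
  have "{Had 0, Had 1} \<subseteq> {g. gate_ok n g}" using assms by (auto simp: gate_ok_def)
  hence "card {Had 0, Had 1} \<le> card {g. gate_ok n g}" using finite_subset[OF sub fA] by (intro card_mono)
  hence "2 \<le> card {g. gate_ok n g}" by simp
  thus ?thesis using c1 finite_subset[OF sub fA] by simp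
qed

lemma ln2_ge: "1/2 \<le> ln (2::real)"
proof -
  have "exp 1 \<le> (4::real)" using exp_le by simp
  hence "ln (exp 1) \<le> ln (4::real)" by (subst ln_le_cancel_iff) auto
  moreover have "ln ((2::real)^2) = real 2 * ln 2" by (rule ln_realpow)
  ultimately show ?thesis by simp
qed


lemma equiv_same:
  assumes "2 * m \<le> n" "S \<subseteq> {..<m} \<times> {..<m}" "T \<subseteq> {..<m} \<times> {..<m}"
    "circuit_equiv n (circ m S) D" "circuit_equiv n (circ m T) D"
  shows "S = T"
proof -
  obtain z1 where z1: "circuit_mat n (circ m S) = z1 \<cdot>\<^sub>m circuit_mat n D"
    using assms(4) unfolding circuit_equiv_def by blast
  obtain z2 where z2: "cmod z2 = 1" "circuit_mat n (circ m T) = z2 \<cdot>\<^sub>m circuit_mat n D"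
    using assms(5) unfolding circuit_equiv_def by blast
  have okS: "cnot_ok n (circ m S)" and okT: "cnot_ok n (circ m T)" using circ_ok assms(1-3) by blast+
  have e1: "pm (2^n) (cf (circ m S)) = z1 \<cdot>\<^sub>m circuit_mat n D" using z1 circuit_mat_pm[OF okS] by simp
  have e2: "pm (2^n) (cf (circ m T)) = z2 \<cdot>\<^sub>m circuit_mat n D" using z2 circuit_mat_pm[OF okT] by simp
  have nz: "z2 \<noteq> 0" using z2(1) by auto
  have "\<forall>c < 2^n. cf (circ m S) c = cf (circ m T) c"
    using pm_equiv[OF e1 e2 nz] cf_lt[OF okS] by blast
  thus ?thesis using circ_inj assms(1-3) by blast
qed

theorem mainTheorem11:
  shows "\<exists>c::real > 0. \<exists>N::nat. \<forall>n \<ge> N. \<exists>C. circuit_ok n C \<and>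
           (\<forall>D. circuit_ok n D \<and> circuit_equiv n C D \<longrightarrow>
                 real (length D) \<ge> c * real n ^ 2 / ln (real n))"
proof (intro exI[of _ "1/192"] conjI exI[of _ 6] allI impI)
  show "(0::real) < 1/192" by simp
  fix n :: nat assume n6: "6 \<le> n"
  define L where "L = 1/192 * real n ^ 2 / ln (real n)"
  show "\<exists>C. circuit_ok n C \<and> (\<forall>D. circuit_ok n D \<and> circuit_equiv n C D \<longrightarrow>
                 real (length D) \<ge> 1/192 * real n ^ 2 / ln (real n))"
  proof (rule ccontr)
    assume H: "\<not> ?thesis"
    have H': "\<exists>D. circuit_ok n D \<and> circuit_equiv n C D \<and> real (length D) < L"
      if "circuit_ok n C" for C using H that unfolding L_def by (auto simp: not_le)
    define m where "m = n div 2"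
    have m2: "2 * m \<le> n" unfolding m_def by simp
    define P where "P = Pow ({..<m} \<times> {..<m})"
    have "\<forall>S\<in>P. \<exists>D. circuit_ok n D \<and> circuit_equiv n (circ m S) D \<and> real (length D) < L"
      using H' circ_ok m2 unfolding P_def by blast
    then obtain Df where Df: "\<forall>S\<in>P. circuit_ok n (Df S) \<and> circuit_equiv n (circ m S) (Df S) \<and> real (length (Df S)) < L"
      by metis
    define K where "K = nat \<lfloor>L\<rfloor>"
    define G where "G = {g. gate_ok n g}"
    have Gp: "finite G" "2 \<le> card G" "card G \<le> n ^ 3"
      using gates_finite_card[of n] n6 unfolding G_def by auto
    have img: "Df ` P \<subseteq> {D. set D \<subseteq> G \<and> length D \<le> K}"
    proof
      fix D assume "D \<in> Df ` P"
      then obtain S where S: "S \<in> P" "D = Df S" by blast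
      hence "circuit_ok n D" "real (length D) < L" using Df by auto
      thus "D \<in> {D. set D \<subseteq> G \<and> length D \<le> K}"
        unfolding K_def G_def circuit_ok_def by (auto intro: le_nat_floor)
    qed
    have inj: "inj_on Df P"
    proof
      fix S T assume ST: "S \<in> P" "T \<in> P" "Df S = Df T"
      have a: "circuit_equiv n (circ m S) (Df S)" using ST(1) Df by blast
      have b: "circuit_equiv n (circ m T) (Df S)" using ST(2,3) Df by metis
      show "S = T"
        by (rule equiv_same[OF m2 _ _ a b]) (use ST P_def in auto)
    qed
    have "2 ^ (m * m) = card P" by (simp add: P_def card_Pow card_cartesian_product power_mult)
    also have "\<dots> \<le> card {D. set D \<subseteq> G \<and> length D \<le> K}"
      by (rule card_inj_on_le[OF inj img]) (simp add: finite_lists_length_le Gp(1))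
    also have "\<dots> \<le> card G ^ (2 * K)" by (rule count_short[OF Gp(1,2)])
    also have "\<dots> \<le> (n ^ 3) ^ (2 * K)" by (rule power_mono[OF Gp(3)]) simp
    finally have nat_ineq: "2 ^ (m * m) \<le> (n ^ 3) ^ (2 * K)" .
    hence "(2::real) ^ (m * m) \<le> (real n ^ 3) ^ (2 * K)"
      by (metis of_nat_le_iff of_nat_numeral of_nat_power)
    hence "ln ((2::real) ^ (m * m)) \<le> ln ((real n ^ 3) ^ (2 * K))"
      using n6 by (subst ln_le_cancel_iff) auto
    hence lnineq: "real (m * m) * ln 2 \<le> real (2 * K) * (real 3 * ln (real n))"
      by (simp add: ln_realpow)
    have lnpos: "0 < ln (real n)" using n6 by simp
    have L0: "0 \<le> L" unfolding L_def using lnpos by simp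
    have KL: "real K \<le> L" unfolding K_def using L0 by simp
    have "real (2 * K) * (real 3 * ln (real n)) = 6 * (real K * ln (real n))" by simp
    also have "\<dots> \<le> 6 * (L * ln (real n))" using KL lnpos by (simp add: mult_right_mono)
    also have "\<dots> = real n ^ 2 / 32" unfolding L_def using lnpos by (simp add: field_simps)
    finally have up: "real (m * m) * ln 2 \<le> real n ^ 2 / 32" using lnineq by linarith
    have nm: "real n - 1 \<le> 2 * real m" unfolding m_def by linarith
    have n1: "0 \<le> real n - 1" using n6 by simp
    have "(real n - 1) ^ 2 \<le> (2 * real m) ^ 2" by (rule power_mono[OF nm n1])
    moreover have "real n * (real n - 4) \<ge> 0" using n6 by simp
    ultimately have "real n ^ 2 / 8 \<le> real (m * m)" by (simp add: power2_eq_square algebra_simps)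
    hence "real n ^ 2 / 8 * (1/2) \<le> real (m * m) * ln 2"
      by (rule mult_mono) (use ln2_ge in auto)
    with up have "real n ^ 2 / 16 \<le> real n ^ 2 / 32" by linarith
    moreover have "0 < real n ^ 2" using n6 by simp
    ultimately show False by linarith
  qed
qed

end
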